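(* Modularity is not relatively monotonic: there exist graphs $G=(V,E)$ and $G'=(V,E')$ on the same node set and clusterings $C,D$ of $V$ such that $G'$ is a $C$-consistent improvement of $G$, $G$ is a $D$-consistent improvement of $G'$, and $Q_{\mathrm{mod}}(G,C)\ge Q_{\mathrm{mod}}(G,D)$, but $Q_{\mathrm{mod}}(G',C)<Q_{\mathrm{mod}}(G',D)$.
   Context: A (symmetric weighted) graph is a pair $G=(V,E)$ of a finite set $V$ and $E:V\times V\to\mathbb{R}_{\ge 0}$ symmetric; self loops allowed. A clustering is a partition of $V$ into nonempty disjoint clusters; write $i\sim_C j$ if $i,j$ lie in the same cluster of $C$. For $c\subseteq V$, $v_c=\sum_{i\in c}\sum_{j\in V}E(i,j)$ and $w_c=\sum_{i,j\in c}E(i,j)$. Modularity: $Q_{\mathrm{mod}}(G,C)=\sum_{c\in C}\left(\frac{w_c}{v_V}-\left(\frac{v_c}{v_V}\right)^2\right)$ (defined when $v_V>0$). A graph $G'=(V,E')$ is a $C$-consistent improvement of $G=(V,E)$ if $E'(i,j)\ge E(i,j)$ whenever $i\sim_C j$ and $E'(i,j)\le E(i,j)$ whenever $i\not\sim_C j$. *)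

theory Defs
  imports Complex_Main "HOL-Library.Disjoint_Sets"
begin

text \<open>The weight function is represented as a total function on the
  vertex type; it is required to vanish outside V x V.\<close>
definition is_graph :: "'a set \<Rightarrow> ('a \<Rightarrow> 'a \<Rightarrow> real) \<Rightarrow> bool" where
  "is_graph V E \<longleftrightarrow> finite V
     \<and> (\<forall>i j. E i j \<ge> 0)
     \<and> (\<forall>i j. E i j = E j i)
     \<and> (\<forall>i j. (i \<notin> V \<or> j \<notin> V) \<longrightarrow> E i j = 0)"

definition is_clustering :: "'a set \<Rightarrow> 'a set set \<Rightarrow> bool" where
  "is_clustering V C \<longleftrightarrow> partition_on V C"

definition same_cluster :: "'a set set \<Rightarrow> 'a \<Rightarrow> 'a \<Rightarrow> bool" where
  "same_cluster C i j \<longleftrightarrow> (\<exists>c\<in>C. i \<in> c \<and> j \<in> c)"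

definition vol :: "'a set \<Rightarrow> ('a \<Rightarrow> 'a \<Rightarrow> real) \<Rightarrow> 'a set \<Rightarrow> real" where
  "vol V E c = (\<Sum>i\<in>c. \<Sum>j\<in>V. E i j)"

definition wgt :: "('a \<Rightarrow> 'a \<Rightarrow> real) \<Rightarrow> 'a set \<Rightarrow> real" where
  "wgt E c = (\<Sum>i\<in>c. \<Sum>j\<in>c. E i j)"

definition Qmod :: "'a set \<Rightarrow> ('a \<Rightarrow> 'a \<Rightarrow> real) \<Rightarrow> 'a set set \<Rightarrow> real" where
  "Qmod V E C = (\<Sum>c\<in>C. wgt E c / vol V E V - (vol V E c / vol V E V)^2)"

definition consistent_improvement ::
  "'a set \<Rightarrow> 'a set set \<Rightarrow> ('a \<Rightarrow> 'a \<Rightarrow> real) \<Rightarrow> ('a \<Rightarrow> 'a \<Rightarrow> real) \<Rightarrow> bool" where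
  "consistent_improvement V C E E' \<longleftrightarrow>
     (\<forall>i\<in>V. \<forall>j\<in>V. (same_cluster C i j \<longrightarrow> E' i j \<ge> E i j)
                  \<and> (\<not> same_cluster C i j \<longrightarrow> E' i j \<le> E i j))"

end

theory Submission
  imports Defs
begin

definition M1 :: "nat list list" where "M1 = [[0,0,1,2],[0,3,2,0],[1,2,3,0],[2,0,0,0]]"
definition M2 :: "nat list list" where "M2 = [[0,0,1,0],[0,3,2,0],[1,2,3,0],[0,0,0,0]]"
definition EE :: "nat list list \<Rightarrow> nat \<Rightarrow> nat \<Rightarrow> real" where
  "EE M i j = (if i < 4 \<and> j < 4 then real (M!i!j) else 0)"

lemma V4: "{0..<4::nat} = {0,1,2,3}" by auto

lemma sc_C: "same_cluster {{0},{1,2},{3::nat}} i j \<longleftrightarrow> (i=0\<and>j=0) \<or> (i\<in>{1,2}\<and>j\<in>{1,2}) \<or> (i=3\<and>j=3)"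
  unfolding same_cluster_def by auto
lemma sc_D: "same_cluster {{0,1,2,3::nat}} i j \<longleftrightarrow> i\<in>{0,1,2,3} \<and> j\<in>{0,1,2,3}"
  unfolding same_cluster_def by auto

theorem theorem4:
  shows "\<exists>(V :: nat set) E E' C D.
           is_graph V E \<and> is_graph V E' \<and> vol V E V > 0 \<and> vol V E' V > 0
         \<and> is_clustering V C \<and> is_clustering V D
         \<and> consistent_improvement V C E E'
         \<and> consistent_improvement V D E' E
         \<and> Qmod V E C \<ge> Qmod V E D
         \<and> Qmod V E' C < Qmod V E' D"
proof (intro exI conjI)
  let ?V = "{0,1,2,3::nat}"
  let ?C = "{{0},{1,2},{3::nat}}"
  let ?D = "{{0,1,2,3::nat}}"
  show "is_graph ?V (EE M1)"
    unfolding is_graph_def EE_def M1_def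
    by (auto simp: less_Suc_eq nth_Cons')
  show "is_graph ?V (EE M2)"
    unfolding is_graph_def EE_def M2_def
    by (auto simp: less_Suc_eq nth_Cons')
  show "vol ?V (EE M1) ?V > 0" unfolding vol_def EE_def M1_def by (simp add: power2_eq_square)
  show "vol ?V (EE M2) ?V > 0" unfolding vol_def EE_def M2_def by (simp add: power2_eq_square)
  show "is_clustering ?V ?C" unfolding is_clustering_def partition_on_def disjoint_def by auto
  show "is_clustering ?V ?D" unfolding is_clustering_def partition_on_def disjoint_def by auto
  show "consistent_improvement ?V ?C (EE M1) (EE M2)"
    unfolding consistent_improvement_def sc_C EE_def M1_def M2_def by auto
  show "consistent_improvement ?V ?D (EE M2) (EE M1)"
    unfolding consistent_improvement_def sc_D EE_def M1_def M2_def by auto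
  show "Qmod ?V (EE M1) ?C \<ge> Qmod ?V (EE M1) ?D"
    unfolding Qmod_def vol_def wgt_def EE_def M1_def by (simp add: power2_eq_square)
  show "Qmod ?V (EE M2) ?C < Qmod ?V (EE M2) ?D"
    unfolding Qmod_def vol_def wgt_def EE_def M2_def by (simp add: power2_eq_square)
qed

end
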